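(* For all $t\in\mathbb{R}$ and all $s\in[t+\tfrac13,\,t+\tfrac23)$, one has $\mathbf{R}(t)\cdot\mathbf{R}(s)\le 0$.
   Context: For $t\in[-\tfrac12,0)$ define points of $S^2\subset\mathbb{R}^3$: $\mathbf r_1(t)=\big(\tfrac{1}{\sqrt2},\,t,\,\sqrt{\tfrac12-t^2}\big)$, $\mathbf r_2(t)=\Big(-\tfrac{\frac12+t}{1+t},\,\tfrac1{\sqrt2},\,\tfrac1{\sqrt2}\tfrac{\sqrt{\frac12-t^2}}{1+t}\Big)$, $\mathbf r_3(t)=\mathbf r_1(t)\times\mathbf r_2(t)=\Big(-\tfrac1{\sqrt2}\tfrac{\sqrt{\frac12-t^2}}{1+t},\,-\sqrt{\tfrac12-t^2},\,\tfrac{\frac12+t+t^2}{1+t}\Big)$. Let $R_{\pi/2}$ be the rotation $(x,y,z)\mapsto(-y,x,z)$ (by $\pi/2$ about the $z$-axis). Define $\mathbf r_0:[0,\tfrac14)\to S^2$ by $\mathbf r_0(t)=\mathbf r_1(6t-\tfrac12)$ for $t\in[0,\tfrac1{12})$, $\mathbf r_0(t)=R_{\pi/2}^3\mathbf r_2(6t-1)$ for $t\in[\tfrac1{12},\tfrac16)$, $\mathbf r_0(t)=R_{\pi/2}^2\mathbf r_3(6t-\tfrac32)$ for $t\in[\tfrac16,\tfrac14)$. Define $\mathbf R:[0,1)\to S^2$ by $\mathbf R(t)=R_{\pi/2}^k\,\mathbf r_0(t-\tfrac k4)$ for $t\in[\tfrac k4,\tfrac{k+1}4)$, $k=0,1,2,3$,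 and extend $\mathbf R$ to $\mathbb R$ periodically with period $1$: $\mathbf R(t):=\mathbf R(t-\lfloor t\rfloor)$. *)

theory Defs
  imports "HOL-Analysis.Analysis" "HOL-Analysis.Cross3"
begin

definition r1 :: "real \<Rightarrow> real^3" where
  "r1 t = vector [1 / sqrt 2, t, sqrt (1/2 - t^2)]"

definition r2 :: "real \<Rightarrow> real^3" where
  "r2 t = vector [- ((1/2 + t) / (1 + t)), 1 / sqrt 2,
                  (1 / sqrt 2) * (sqrt (1/2 - t^2) / (1 + t))]"

definition r3 :: "real \<Rightarrow> real^3" where
  "r3 t = cross3 (r1 t) (r2 t)"

definition rot :: "real^3 \<Rightarrow> real^3" where
  "rot v = vector [- (v $ 2), v $ 1, v $ 3]"

text \<open>r0 on [0,1/4) (values outside this interval are irrelevant).\<close>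
definition r0 :: "real \<Rightarrow> real^3" where
  "r0 t = (if t < 1/12 then r1 (6*t - 1/2)
           else if t < 1/6 then (rot ^^ 3) (r2 (6*t - 1))
           else (rot ^^ 2) (r3 (6*t - 3/2)))"

text \<open>The curve R, 1-periodic: on [k/4,(k+1)/4) within [0,1) it is rot^k (r0 (t - k/4)).\<close>
definition Rc :: "real \<Rightarrow> real^3" where
  "Rc t = (let u = t - of_int \<lfloor>t\<rfloor>; k = nat \<lfloor>4 * u\<rfloor>
           in (rot ^^ k) (r0 (u - real k / 4)))"

end

theory Submission
  imports Defs
begin

lemma rot_vec: "rot (vector [x, y, z]) = vector [- y, x, z]"
  by (simp add: rot_def)

lemma rotp_vec:
  "(rot ^^ 1) (vector [x, y, z]) = vector [- y, x, z]"
  "(rot ^^ 2) (vector [x, y, z]) = vector [- x, - y, z]"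
  "(rot ^^ 3) (vector [x, y, z]) = vector [y, - x, z]"
  by (simp_all add: rot_vec numeral_3_eq_3 numeral_2_eq_2)

lemma dot_vec: "(vector [x1, x2, x3] :: real^3) \<bullet> vector [y1, y2, y3] = x1 * y1 + x2 * y2 + x3 * y3"
  by (simp add: inner_vec_def sum_3)

lemma cross_vec: "cross3 (vector [x1, x2, x3]) (vector [y1, y2, y3]) =
   vector [x2 * y3 - x3 * y2, x3 * y1 - x1 * y3, x1 * y2 - x2 * y1]"
  by (simp add: cross3_def vec_eq_iff forall_3)

lemma I3_id: "(1/2 + u/2 + v/2 + u * v)^2 - (1/2) * (1/2 - u^2) * (1/2 - v^2) = (1/2) * (u * v + u + v + 1/2::real)^2"
  by (simp add: field_simps eval_nat_numeral)
lemma I1_e2: "((1/2+v-u-u * v)^2 - (1/2 - u^2) * (1/2 - v^2)::real) = 1 * (1+2 * u) * (2 * (v-u)) * (-(2 * v)) + (9/8) * (2 * (v-u))^2 * (-(2 * v)) + (1/4) * (2 * (v-u)) * (-(2 * v))^2 + (1/2) * (1+2 * u)^2 * (2 * (v-u)) + (11/8) * (1+2 * u) * (2 * (v-u))^2 + (7/8) * (2 * (v-u))^3"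
  by (simp add: field_simps eval_nat_numeral)
lemma I1_e3: "((1/2+v-u-u * v)::real) = (1/2) * (1+2 * u)^2 + (3/2) * (1+2 * u) * (2 * (v-u)) + 1 * (1+2 * u) * (-(2 * v)) + 1 * (2 * (v-u))^2 + (5/4) * (2 * (v-u)) * (-(2 * v)) + (1/4) * (-(2 * v))^2"
  by (simp add: field_simps eval_nat_numeral)

lemma I2_e2: "((1/2+u * v)^2 - (1/2 - u^2) * (1/2 - v^2)::real) = (1/2) * (-(2 * u))^2 * (-(2 * v))^2 + (1/2) * (-(2 * u))^2 * (1+2 * v) * (-(2 * v)) + (1/8) * (-(2 * u))^2 * (1+2 * v)^2 + (1/2) * (1+2 * u) * (-(2 * u)) * (-(2 * v))^2 + (1/4) * (1+2 * u) * (-(2 * u)) * (1+2 * v) * (-(2 * v)) + (1/8) * (1+2 * u)^2 * (-(2 * v))^2"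
  by (simp add: field_simps eval_nat_numeral)
lemma I2_e3: "((1/2+u * v)::real) = (3/4) * (-(2 * u)) * (-(2 * v)) + (1/2) * (-(2 * u)) * (1+2 * v) + (1/2) * (1+2 * u) * (-(2 * v)) + (1/2) * (1+2 * u) * (1+2 * v)"
  by (simp add: field_simps eval_nat_numeral)

lemma I4_e2: "(((1+u) * (1+v)+2 * (1/2+u) * (1/2+v))^2 - (1/2 - u^2) * (1/2 - v^2)::real) = (1/8) * (-(2 * u))^2 * (1+2 * v)^2 + (1/4) * (1+2 * u) * (-(2 * u)) * (1+2 * v) * (-(2 * v)) + 1 * (1+2 * u) * (-(2 * u)) * (1+2 * v)^2 + (1/8) * (1+2 * u)^2 * (-(2 * v))^2 + 1 * (1+2 * u)^2 * (1+2 * v) * (-(2 * v)) + 2 * (1+2 * u)^2 * (1+2 * v)^2"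
  by (simp add: field_simps eval_nat_numeral)
lemma I4_e3: "(((1+u) * (1+v)+2 * (1/2+u) * (1/2+v))::real) = (1/4) * (-(2 * u)) * (-(2 * v)) + (1/2) * (-(2 * u)) * (1+2 * v) + (1/2) * (1+2 * u) * (-(2 * v)) + (3/2) * (1+2 * u) * (1+2 * v)"
  by (simp add: field_simps eval_nat_numeral)

lemma I5_e2: "((1/2) * (1/2 - v^2) * (1+v-u)^2 - (1/2 - u^2) * (1/2+v+v^2)^2::real) = (7/64) * (-(2 * u))^2 * (-(2 * v))^4 + (13/16) * (-(2 * u))^2 * (1+2 * v) * (-(2 * v))^3 + (61/32) * (-(2 * u))^2 * (1+2 * v)^2 * (-(2 * v))^2 + (7/4) * (-(2 * u))^2 * (1+2 * v)^3 * (-(2 * v)) + (1/2) * (-(2 * u))^2 * (1+2 * v)^4 + (1/16) * (1+2 * u) * (-(2 * u)) * (-(2 * v))^4 + (11/16) * (1+2 * u) * (-(2 * u)) * (1+2 * v) * (-(2 * v))^3 + (15/8) * (1+2 * u) * (-(2 * u)) * (1+2 * v)^2 * (-(2 * v))^2 + (15/8) * (1+2 * u) * (-(2 * u)) * (1+2 * v)^3 * (-(2 * v)) + (1/2) * (1+2 * u) * (-(2 * u)) * (1+2 * v)^4 + (1/8) * (1+2 * u)^2 * (1+2 * v) * (-(2 * v))^3 + (7/16) * (1+2 * u)^2 * (1+2 * v)^2 * (-(2 * v))^2 + (1/2) * (1+2 * u)^2 * (1+2 * v)^3 * (-(2 * v)) + (1/8) * (1+2 * u)^2 * (1+2 * 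v)^4"
  by (simp add: field_simps eval_nat_numeral)
lemma I5_e3: "((1+v-u)::real) = 1 * (-(2 * u)) * (-(2 * v)) + (3/2) * (-(2 * u)) * (1+2 * v) + (1/2) * (1+2 * u) * (-(2 * v)) + 1 * (1+2 * u) * (1+2 * v)"
  by (simp add: field_simps eval_nat_numeral)

lemma I6_e2: "((1/2 - v^2) * (1/2+u+u * v)^2 - (1/2 - u^2) * (1/2+v+v^2)^2::real) = (1/4) * (1+2 * v)^2 * (2 * (u-v)) * (-(2 * u)) + (1/8) * (1+2 * v) * (2 * (u-v)) * (-(2 * u))^2 + (1/16) * (2 * (u-v))^3 * (-(2 * u)) + (1/32) * (2 * (u-v))^2 * (-(2 * u))^2 + (7/16) * (1+2 * v)^2 * (2 * (u-v))^2 + (1/4) * (1+2 * v) * (2 * (u-v))^3 + (1/32) * (2 * (u-v))^4 + (1/4) * (1+2 * v)^3 * (2 * (u-v)) + (3/8) * (1+2 * v) * (2 * (u-v))^2 * (-(2 * u))"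
  by (simp add: field_simps eval_nat_numeral)
lemma I6_e3: "((1/2+u+u * v)::real) = (1/2) * (1+2 * v)^2 + 1 * (1+2 * v) * (2 * (u-v)) + (1/2) * (1+2 * v) * (-(2 * u)) + (1/2) * (2 * (u-v))^2 + (3/4) * (2 * (u-v)) * (-(2 * u)) + (1/4) * (-(2 * u))^2"
  by (simp add: field_simps eval_nat_numeral)

lemma I7_e2: "((1/2 - v^2) * (1/2+v+u * v)^2 - (1/2 - u^2) * (1/2+v+v^2)^2::real) = (1/4) * (1+2 * u)^3 * (2 * (v-u)) * (-(2 * v)) + (13/16) * (1+2 * u)^2 * (2 * (v-u))^2 * (-(2 * v)) + (3/8) * (1+2 * u)^2 * (2 * (v-u)) * (-(2 * v))^2 + (7/8) * (1+2 * u) * (2 * (v-u))^3 * (-(2 * v)) + (27/32) * (1+2 * u) * (2 * (v-u))^2 * (-(2 * v))^2 + (5/16) * (2 * (v-u))^4 * (-(2 * v)) + (15/32) * (2 * (v-u))^3 * (-(2 * v))^2 + (9/32) * (2 * (v-u))^2 * (-(2 * v))^3 + (1/16) * (2 * (v-u)) * (-(2 * v))^4 + (1/4) * (1+2 * u) * (2 * (v-u)) * (-(2 * v))^3 + (1/16) * (1+2 * u)^3 * (2 * (v-u))^2 + (3/16) * (1+2 * u)^2 * (2 * (v-u))^3 + (3/16) * (1+2 * u) * (2 * (v-u))^4 + (1/16) * (2 * (v-u))^5"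
  by (simp add: field_simps eval_nat_numeral)
lemma I7_e3: "((1/2+v+u * v)::real) = (1/2) * (1+2 * u)^2 + 1 * (1+2 * u) * (2 * (v-u)) + (1/2) * (1+2 * u) * (-(2 * v)) + (1/2) * (2 * (v-u))^2 + (3/4) * (2 * (v-u)) * (-(2 * v)) + (1/4) * (-(2 * v))^2"
  by (simp add: field_simps eval_nat_numeral)

lemma I8_e2: "((1/2 - v^2) * ((1+u)/2+(1/2+u) * (1+v))^2 - (1/2) * (1/2 - u^2) * (1/2+v+v^2)^2::real) = (1/128) * (-(2 * u))^2 * (-(2 * v))^4 + (1/16) * (-(2 * u))^2 * (1+2 * v) * (-(2 * v))^3 + (7/64) * (-(2 * u))^2 * (1+2 * v)^2 * (-(2 * v))^2 + (1/16) * (-(2 * u))^2 * (1+2 * v)^3 * (-(2 * v)) + (1/16) * (1+2 * u) * (-(2 * u)) * (-(2 * v))^4 + (15/32) * (1+2 * u) * (-(2 * u)) * (1+2 * v) * (-(2 * v))^3 + (15/16) * (1+2 * u) * (-(2 * u)) * (1+2 * v)^2 * (-(2 * v))^2 + (11/16) * (1+2 * u) * (-(2 * u)) * (1+2 * v)^3 * (-(2 * v)) + (1/8) * (1+2 * u) * (-(2 * u)) * (1+2 * v)^4 + (1/8) * (1+2 * u)^2 * (-(2 * v))^4 + (7/8) * (1+2 * u)^2 * (1+2 * v) * (-(2 * v))^3 + (61/32) * (1+2 * u)^2 * (1+2 * v)^2 * (-(2 * v))^2 + (13/8) * (1+2 * u)^2 * (1+2 * v)^3 * (-(2 * v)) +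 (7/16) * (1+2 * u)^2 * (1+2 * v)^4"
  by (simp add: field_simps eval_nat_numeral)
lemma I8_e3: "(((1+u)/2+(1/2+u) * (1+v))::real) = (1/4) * (-(2 * u)) * (-(2 * v)) + (1/4) * (-(2 * u)) * (1+2 * v) + (3/4) * (1+2 * u) * (-(2 * v)) + 1 * (1+2 * u) * (1+2 * v)"
  by (simp add: field_simps eval_nat_numeral)

lemma I9_e2: "((1/2 - u^2) * (1/2 - v^2) * (1/2+(1+u) * (1+v))^2 - (1/2+u+u^2)^2 * (1/2+v+v^2)^2::real) = (1/32) * (-(2 * u))^4 * (-(2 * v))^4 + (7/32) * (-(2 * u))^4 * (1+2 * v) * (-(2 * v))^3 + (61/128) * (-(2 * u))^4 * (1+2 * v)^2 * (-(2 * v))^2 + (13/32) * (-(2 * u))^4 * (1+2 * v)^3 * (-(2 * v)) + (7/64) * (-(2 * u))^4 * (1+2 * v)^4 + (7/32) * (1+2 * u) * (-(2 * u))^3 * (-(2 * v))^4 + (97/64) * (1+2 * u) * (-(2 * u))^3 * (1+2 * v) * (-(2 * v))^3 + (107/32) * (1+2 * u) * (-(2 * u))^3 * (1+2 * v)^2 * (-(2 * v))^2 + (93/32) * (1+2 * u) * (-(2 * u))^3 * (1+2 * v)^3 * (-(2 * v)) + (13/16) * (1+2 * u) * (-(2 * u))^3 * (1+2 * v)^4 + (61/128) * (1+2 * u)^2 * (-(2 * u))^2 * (-(2 * v))^4 + (107/32) * (1+2 * u)^2 * (-(2 * u))^2 * (1+2 * v) * (-(2 * v))^3 + (241/32) *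 (1+2 * u)^2 * (-(2 * u))^2 * (1+2 * v)^2 * (-(2 * v))^2 + (107/16) * (1+2 * u)^2 * (-(2 * u))^2 * (1+2 * v)^3 * (-(2 * v)) + (61/32) * (1+2 * u)^2 * (-(2 * u))^2 * (1+2 * v)^4 + (13/32) * (1+2 * u)^3 * (-(2 * u)) * (-(2 * v))^4 + (93/32) * (1+2 * u)^3 * (-(2 * u)) * (1+2 * v) * (-(2 * v))^3 + (107/16) * (1+2 * u)^3 * (-(2 * u)) * (1+2 * v)^2 * (-(2 * v))^2 + (97/16) * (1+2 * u)^3 * (-(2 * u)) * (1+2 * v)^3 * (-(2 * v)) + (7/4) * (1+2 * u)^3 * (-(2 * u)) * (1+2 * v)^4 + (7/64) * (1+2 * u)^4 * (-(2 * v))^4 + (13/16) * (1+2 * u)^4 * (1+2 * v) * (-(2 * v))^3 + (61/32) * (1+2 * u)^4 * (1+2 * v)^2 * (-(2 * v))^2 + (7/4) * (1+2 * u)^4 * (1+2 * v)^3 * (-(2 * v)) + (1/2) * (1+2 * u)^4 * (1+2 * v)^4"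
  by (simp add: field_simps eval_nat_numeral)
lemma I9_e3: "((1/2+(1+u) * (1+v))::real) = (3/4) * (-(2 * u)) * (-(2 * v)) + 1 * (-(2 * u)) * (1+2 * v) + 1 * (1+2 * u) * (-(2 * v)) + (3/2) * (1+2 * u) * (1+2 * v)"
  by (simp add: field_simps eval_nat_numeral)

context
  fixes u v a b h :: real
  assumes U: "-1/2 \<le> u" "u \<le> 0" and V: "-1/2 \<le> v" "v \<le> 0"
    and a0: "0 \<le> a" and a2: "a^2 = 1/2 - u^2"
    and b0: "0 \<le> b" and b2: "b^2 = 1/2 - v^2"
    and h0: "0 \<le> h" and h2: "h^2 = 1/2"
begin

definition "pu = 1+2 * u"
definition "nu = -(2 * u)"
definition "pv = 1+2 * v"
definition "nv = -(2 * v)"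
definition "duv = 2 * (v-u)"
definition "dvu = 2 * (u-v)"
lemmas xdefs = pu_def nu_def pv_def nv_def duv_def dvu_def
lemma xnn_box: "0 \<le> pu" "0 \<le> nu" "0 \<le> pv" "0 \<le> nv"
  using U V unfolding xdefs by simp_all

lemma I3: "h * a * b \<le> 1/2 + u/2 + v/2 + u * v"
proof (rule power2_le_imp_le)
  have "(1/2 + u/2 + v/2 + u * v)^2 - (h * a * b)^2 = (1/2 + u/2 + v/2 + u * v)^2 - (1/2) * (1/2 - u^2) * (1/2 - v^2)"
    by (simp add: power_mult_distrib a2 b2 h2)
  also have "\<dots> = (1/2) * (u * v + u + v + 1/2)^2" by (rule I3_id)
  finally have "(1/2 + u/2 + v/2 + u * v)^2 - (h * a * b)^2 = (1/2) * (u * v + u + v + 1/2)^2" .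
  moreover have "0 \<le> (1/2) * (u * v + u + v + 1/2)^2" by simp
  ultimately show "(h * a * b)^2 \<le> (1/2 + u/2 + v/2 + u * v)^2" by linarith
  have "1/2 + u/2 + v/2 + u * v = (1/2) * (1 + u + v) + u * v" by simp
  moreover have "0 \<le> u * v" using U V by (simp add: zero_le_mult_iff)
  ultimately show "0 \<le> 1/2 + u/2 + v/2 + u * v" using U V by linarith
qed
lemma I1:
  assumes "u \<le> v"
  shows "a * b \<le> (1/2+v-u-u * v)"
proof (rule power2_le_imp_le)
  have dnn: "0 \<le> duv" using assms unfolding duv_def by simp
  note xnn = xnn_box dnn
  have e1: "((1/2+v-u-u * v))^2 - (a * b)^2 = (1/2+v-u-u * v)^2 - (1/2 - u^2) * (1/2 - v^2)"
    by (simp add: power_mult_distrib a2 b2 h2)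
  have e2: "(1/2+v-u-u * v)^2 - (1/2 - u^2) * (1/2 - v^2) = 1 * pu * duv * nv + (9/8) * duv^2 * nv + (1/4) * duv * nv^2 + (1/2) * pu^2 * duv + (11/8) * pu * duv^2 + (7/8) * duv^3"
    unfolding xdefs by (rule I1_e2)
  have p: "0 \<le> 1 * pu * duv * nv + (9/8) * duv^2 * nv + (1/4) * duv * nv^2 + (1/2) * pu^2 * duv + (11/8) * pu * duv^2 + (7/8) * duv^3"
    using xnn by (intro add_nonneg_nonneg mult_nonneg_nonneg zero_le_power; simp)
  show "(a * b)^2 \<le> ((1/2+v-u-u * v))^2" using e1 e2 p by linarith
  have e3: "(1/2+v-u-u * v) = (1/2) * pu^2 + (3/2) * pu * duv + 1 * pu * nv + 1 * duv^2 + (5/4) * duv * nv + (1/4) * nv^2" unfolding xdefs by (rule I1_e3)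
  have "0 \<le> (1/2) * pu^2 + (3/2) * pu * duv + 1 * pu * nv + 1 * duv^2 + (5/4) * duv * nv + (1/4) * nv^2"
    using xnn by (intro add_nonneg_nonneg mult_nonneg_nonneg zero_le_power; simp)
  then have "0 \<le> (1/2+v-u-u * v)" using e3 by linarith
  then show "0 \<le> (1/2+v-u-u * v)" using a0 b0 h0 by simp
qed

lemma I2:
  shows "a * b \<le> (1/2+u * v)"
proof (rule power2_le_imp_le)
  note xnn = xnn_box 
  have e1: "((1/2+u * v))^2 - (a * b)^2 = (1/2+u * v)^2 - (1/2 - u^2) * (1/2 - v^2)"
    by (simp add: power_mult_distrib a2 b2 h2)
  have e2: "(1/2+u * v)^2 - (1/2 - u^2) * (1/2 - v^2) = (1/2) * nu^2 * nv^2 + (1/2) * nu^2 * pv * nv + (1/8) * nu^2 * pv^2 + (1/2) * pu * nu * nv^2 + (1/4) * pu * nu * pv * nv + (1/8) * pu^2 * nv^2"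
    unfolding xdefs by (rule I2_e2)
  have p: "0 \<le> (1/2) * nu^2 * nv^2 + (1/2) * nu^2 * pv * nv + (1/8) * nu^2 * pv^2 + (1/2) * pu * nu * nv^2 + (1/4) * pu * nu * pv * nv + (1/8) * pu^2 * nv^2"
    using xnn by (intro add_nonneg_nonneg mult_nonneg_nonneg zero_le_power; simp)
  show "(a * b)^2 \<le> ((1/2+u * v))^2" using e1 e2 p by linarith
  have e3: "(1/2+u * v) = (3/4) * nu * nv + (1/2) * nu * pv + (1/2) * pu * nv + (1/2) * pu * pv" unfolding xdefs by (rule I2_e3)
  have "0 \<le> (3/4) * nu * nv + (1/2) * nu * pv + (1/2) * pu * nv + (1/2) * pu * pv"
    using xnn by (intro add_nonneg_nonneg mult_nonneg_nonneg zero_le_power; simp)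
  then have "0 \<le> (1/2+u * v)" using e3 by linarith
  then show "0 \<le> (1/2+u * v)" using a0 b0 h0 by simp
qed

lemma I4:
  shows "a * b \<le> ((1+u) * (1+v)+2 * (1/2+u) * (1/2+v))"
proof (rule power2_le_imp_le)
  note xnn = xnn_box 
  have e1: "(((1+u) * (1+v)+2 * (1/2+u) * (1/2+v)))^2 - (a * b)^2 = ((1+u) * (1+v)+2 * (1/2+u) * (1/2+v))^2 - (1/2 - u^2) * (1/2 - v^2)"
    by (simp add: power_mult_distrib a2 b2 h2)
  have e2: "((1+u) * (1+v)+2 * (1/2+u) * (1/2+v))^2 - (1/2 - u^2) * (1/2 - v^2) = (1/8) * nu^2 * pv^2 + (1/4) * pu * nu * pv * nv + 1 * pu * nu * pv^2 + (1/8) * pu^2 * nv^2 + 1 * pu^2 * pv * nv + 2 * pu^2 * pv^2"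
    unfolding xdefs by (rule I4_e2)
  have p: "0 \<le> (1/8) * nu^2 * pv^2 + (1/4) * pu * nu * pv * nv + 1 * pu * nu * pv^2 + (1/8) * pu^2 * nv^2 + 1 * pu^2 * pv * nv + 2 * pu^2 * pv^2"
    using xnn by (intro add_nonneg_nonneg mult_nonneg_nonneg zero_le_power; simp)
  show "(a * b)^2 \<le> (((1+u) * (1+v)+2 * (1/2+u) * (1/2+v)))^2" using e1 e2 p by linarith
  have e3: "((1+u) * (1+v)+2 * (1/2+u) * (1/2+v)) = (1/4) * nu * nv + (1/2) * nu * pv + (1/2) * pu * nv + (3/2) * pu * pv" unfolding xdefs by (rule I4_e3)
  have "0 \<le> (1/4) * nu * nv + (1/2) * nu * pv + (1/2) * pu * nv + (3/2) * pu * pv"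
    using xnn by (intro add_nonneg_nonneg mult_nonneg_nonneg zero_le_power; simp)
  then have "0 \<le> ((1+u) * (1+v)+2 * (1/2+u) * (1/2+v))" using e3 by linarith
  then show "0 \<le> ((1+u) * (1+v)+2 * (1/2+u) * (1/2+v))" using a0 b0 h0 by simp
qed

lemma I5:
  shows "a * (1/2+v+v^2) \<le> h * b * (1+v-u)"
proof (rule power2_le_imp_le)
  note xnn = xnn_box 
  have e1: "(h * b * (1+v-u))^2 - (a * (1/2+v+v^2))^2 = (1/2) * (1/2 - v^2) * (1+v-u)^2 - (1/2 - u^2) * (1/2+v+v^2)^2"
    by (simp add: power_mult_distrib a2 b2 h2)
  have e2: "(1/2) * (1/2 - v^2) * (1+v-u)^2 - (1/2 - u^2) * (1/2+v+v^2)^2 = (7/64) * nu^2 * nv^4 + (13/16) * nu^2 * pv * nv^3 + (61/32) * nu^2 * pv^2 * nv^2 + (7/4) * nu^2 * pv^3 * nv + (1/2) * nu^2 * pv^4 + (1/16) * pu * nu * nv^4 + (11/16) * pu * nu * pv * nv^3 + (15/8) * pu * nu * pv^2 * nv^2 + (15/8) * pu * nu * pv^3 * nv + (1/2) * pu * nu * pv^4 + (1/8) * pu^2 * pv * nv^3 + (7/16) * pu^2 * pv^2 * nv^2 + (1/2) * pu^2 * pv^3 * nv + (1/8) * pu^2 * pv^4"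
    unfolding xdefs by (rule I5_e2)
  have p: "0 \<le> (7/64) * nu^2 * nv^4 + (13/16) * nu^2 * pv * nv^3 + (61/32) * nu^2 * pv^2 * nv^2 + (7/4) * nu^2 * pv^3 * nv + (1/2) * nu^2 * pv^4 + (1/16) * pu * nu * nv^4 + (11/16) * pu * nu * pv * nv^3 + (15/8) * pu * nu * pv^2 * nv^2 + (15/8) * pu * nu * pv^3 * nv + (1/2) * pu * nu * pv^4 + (1/8) * pu^2 * pv * nv^3 + (7/16) * pu^2 * pv^2 * nv^2 + (1/2) * pu^2 * pv^3 * nv + (1/8) * pu^2 * pv^4"
    using xnn by (intro add_nonneg_nonneg mult_nonneg_nonneg zero_le_power; simp)
  show "(a * (1/2+v+v^2))^2 \<le> (h * b * (1+v-u))^2" using e1 e2 p by linarith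
  have e3: "(1+v-u) = 1 * nu * nv + (3/2) * nu * pv + (1/2) * pu * nv + 1 * pu * pv" unfolding xdefs by (rule I5_e3)
  have "0 \<le> 1 * nu * nv + (3/2) * nu * pv + (1/2) * pu * nv + 1 * pu * pv"
    using xnn by (intro add_nonneg_nonneg mult_nonneg_nonneg zero_le_power; simp)
  then have "0 \<le> (1+v-u)" using e3 by linarith
  then show "0 \<le> h * b * (1+v-u)" using a0 b0 h0 by simp
qed

lemma I6:
  assumes "v \<le> u"
  shows "a * (1/2+v+v^2) \<le> b * (1/2+u+u * v)"
proof (rule power2_le_imp_le)
  have dnn: "0 \<le> dvu" using assms unfolding dvu_def by simp
  note xnn = xnn_box dnn
  have e1: "(b * (1/2+u+u * v))^2 - (a * (1/2+v+v^2))^2 = (1/2 - v^2) * (1/2+u+u * v)^2 - (1/2 - u^2) * (1/2+v+v^2)^2"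
    by (simp add: power_mult_distrib a2 b2 h2)
  have e2: "(1/2 - v^2) * (1/2+u+u * v)^2 - (1/2 - u^2) * (1/2+v+v^2)^2 = (1/4) * pv^2 * dvu * nu + (1/8) * pv * dvu * nu^2 + (1/16) * dvu^3 * nu + (1/32) * dvu^2 * nu^2 + (7/16) * pv^2 * dvu^2 + (1/4) * pv * dvu^3 + (1/32) * dvu^4 + (1/4) * pv^3 * dvu + (3/8) * pv * dvu^2 * nu"
    unfolding xdefs by (rule I6_e2)
  have p: "0 \<le> (1/4) * pv^2 * dvu * nu + (1/8) * pv * dvu * nu^2 + (1/16) * dvu^3 * nu + (1/32) * dvu^2 * nu^2 + (7/16) * pv^2 * dvu^2 + (1/4) * pv * dvu^3 + (1/32) * dvu^4 + (1/4) * pv^3 * dvu + (3/8) * pv * dvu^2 * nu"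
    using xnn by (intro add_nonneg_nonneg mult_nonneg_nonneg zero_le_power; simp)
  show "(a * (1/2+v+v^2))^2 \<le> (b * (1/2+u+u * v))^2" using e1 e2 p by linarith
  have e3: "(1/2+u+u * v) = (1/2) * pv^2 + 1 * pv * dvu + (1/2) * pv * nu + (1/2) * dvu^2 + (3/4) * dvu * nu + (1/4) * nu^2" unfolding xdefs by (rule I6_e3)
  have "0 \<le> (1/2) * pv^2 + 1 * pv * dvu + (1/2) * pv * nu + (1/2) * dvu^2 + (3/4) * dvu * nu + (1/4) * nu^2"
    using xnn by (intro add_nonneg_nonneg mult_nonneg_nonneg zero_le_power; simp)
  then have "0 \<le> (1/2+u+u * v)" using e3 by linarith
  then show "0 \<le> b * (1/2+u+u * v)" using a0 b0 h0 by simp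
qed

lemma I7:
  assumes "u \<le> v"
  shows "a * (1/2+v+v^2) \<le> b * (1/2+v+u * v)"
proof (rule power2_le_imp_le)
  have dnn: "0 \<le> duv" using assms unfolding duv_def by simp
  note xnn = xnn_box dnn
  have e1: "(b * (1/2+v+u * v))^2 - (a * (1/2+v+v^2))^2 = (1/2 - v^2) * (1/2+v+u * v)^2 - (1/2 - u^2) * (1/2+v+v^2)^2"
    by (simp add: power_mult_distrib a2 b2 h2)
  have e2: "(1/2 - v^2) * (1/2+v+u * v)^2 - (1/2 - u^2) * (1/2+v+v^2)^2 = (1/4) * pu^3 * duv * nv + (13/16) * pu^2 * duv^2 * nv + (3/8) * pu^2 * duv * nv^2 + (7/8) * pu * duv^3 * nv + (27/32) * pu * duv^2 * nv^2 + (5/16) * duv^4 * nv + (15/32) * duv^3 * nv^2 + (9/32) * duv^2 * nv^3 + (1/16) * duv * nv^4 + (1/4) * pu * duv * nv^3 + (1/16) * pu^3 * duv^2 + (3/16) * pu^2 * duv^3 + (3/16) * pu * duv^4 + (1/16) * duv^5"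
    unfolding xdefs by (rule I7_e2)
  have p: "0 \<le> (1/4) * pu^3 * duv * nv + (13/16) * pu^2 * duv^2 * nv + (3/8) * pu^2 * duv * nv^2 + (7/8) * pu * duv^3 * nv + (27/32) * pu * duv^2 * nv^2 + (5/16) * duv^4 * nv + (15/32) * duv^3 * nv^2 + (9/32) * duv^2 * nv^3 + (1/16) * duv * nv^4 + (1/4) * pu * duv * nv^3 + (1/16) * pu^3 * duv^2 + (3/16) * pu^2 * duv^3 + (3/16) * pu * duv^4 + (1/16) * duv^5"
    using xnn by (intro add_nonneg_nonneg mult_nonneg_nonneg zero_le_power; simp)
  show "(a * (1/2+v+v^2))^2 \<le> (b * (1/2+v+u * v))^2" using e1 e2 p by linarith
  have e3: "(1/2+v+u * v) = (1/2) * pu^2 + 1 * pu * duv + (1/2) * pu * nv + (1/2) * duv^2 + (3/4) * duv * nv + (1/4) * nv^2" unfolding xdefs by (rule I7_e3)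
  have "0 \<le> (1/2) * pu^2 + 1 * pu * duv + (1/2) * pu * nv + (1/2) * duv^2 + (3/4) * duv * nv + (1/4) * nv^2"
    using xnn by (intro add_nonneg_nonneg mult_nonneg_nonneg zero_le_power; simp)
  then have "0 \<le> (1/2+v+u * v)" using e3 by linarith
  then show "0 \<le> b * (1/2+v+u * v)" using a0 b0 h0 by simp
qed

lemma I8:
  shows "h * a * (1/2+v+v^2) \<le> b * ((1+u)/2+(1/2+u) * (1+v))"
proof (rule power2_le_imp_le)
  note xnn = xnn_box 
  have e1: "(b * ((1+u)/2+(1/2+u) * (1+v)))^2 - (h * a * (1/2+v+v^2))^2 = (1/2 - v^2) * ((1+u)/2+(1/2+u) * (1+v))^2 - (1/2) * (1/2 - u^2) * (1/2+v+v^2)^2"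
    by (simp add: power_mult_distrib a2 b2 h2)
  have e2: "(1/2 - v^2) * ((1+u)/2+(1/2+u) * (1+v))^2 - (1/2) * (1/2 - u^2) * (1/2+v+v^2)^2 = (1/128) * nu^2 * nv^4 + (1/16) * nu^2 * pv * nv^3 + (7/64) * nu^2 * pv^2 * nv^2 + (1/16) * nu^2 * pv^3 * nv + (1/16) * pu * nu * nv^4 + (15/32) * pu * nu * pv * nv^3 + (15/16) * pu * nu * pv^2 * nv^2 + (11/16) * pu * nu * pv^3 * nv + (1/8) * pu * nu * pv^4 + (1/8) * pu^2 * nv^4 + (7/8) * pu^2 * pv * nv^3 + (61/32) * pu^2 * pv^2 * nv^2 + (13/8) * pu^2 * pv^3 * nv + (7/16) * pu^2 * pv^4"
    unfolding xdefs by (rule I8_e2)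
  have p: "0 \<le> (1/128) * nu^2 * nv^4 + (1/16) * nu^2 * pv * nv^3 + (7/64) * nu^2 * pv^2 * nv^2 + (1/16) * nu^2 * pv^3 * nv + (1/16) * pu * nu * nv^4 + (15/32) * pu * nu * pv * nv^3 + (15/16) * pu * nu * pv^2 * nv^2 + (11/16) * pu * nu * pv^3 * nv + (1/8) * pu * nu * pv^4 + (1/8) * pu^2 * nv^4 + (7/8) * pu^2 * pv * nv^3 + (61/32) * pu^2 * pv^2 * nv^2 + (13/8) * pu^2 * pv^3 * nv + (7/16) * pu^2 * pv^4"
    using xnn by (intro add_nonneg_nonneg mult_nonneg_nonneg zero_le_power; simp)
  show "(h * a * (1/2+v+v^2))^2 \<le> (b * ((1+u)/2+(1/2+u) * (1+v)))^2" using e1 e2 p by linarith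
  have e3: "((1+u)/2+(1/2+u) * (1+v)) = (1/4) * nu * nv + (1/4) * nu * pv + (3/4) * pu * nv + 1 * pu * pv" unfolding xdefs by (rule I8_e3)
  have "0 \<le> (1/4) * nu * nv + (1/4) * nu * pv + (3/4) * pu * nv + 1 * pu * pv"
    using xnn by (intro add_nonneg_nonneg mult_nonneg_nonneg zero_le_power; simp)
  then have "0 \<le> ((1+u)/2+(1/2+u) * (1+v))" using e3 by linarith
  then show "0 \<le> b * ((1+u)/2+(1/2+u) * (1+v))" using a0 b0 h0 by simp
qed

lemma I9:
  shows "(1/2+u+u^2) * (1/2+v+v^2) \<le> a * b * (1/2+(1+u) * (1+v))"
proof (rule power2_le_imp_le)
  note xnn = xnn_box 
  have e1: "(a * b * (1/2+(1+u) * (1+v)))^2 - ((1/2+u+u^2) * (1/2+v+v^2))^2 = (1/2 - u^2) * (1/2 - v^2) * (1/2+(1+u) * (1+v))^2 - (1/2+u+u^2)^2 * (1/2+v+v^2)^2"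
    by (simp add: power_mult_distrib a2 b2 h2)
  have e2: "(1/2 - u^2) * (1/2 - v^2) * (1/2+(1+u) * (1+v))^2 - (1/2+u+u^2)^2 * (1/2+v+v^2)^2 = (1/32) * nu^4 * nv^4 + (7/32) * nu^4 * pv * nv^3 + (61/128) * nu^4 * pv^2 * nv^2 + (13/32) * nu^4 * pv^3 * nv + (7/64) * nu^4 * pv^4 + (7/32) * pu * nu^3 * nv^4 + (97/64) * pu * nu^3 * pv * nv^3 + (107/32) * pu * nu^3 * pv^2 * nv^2 + (93/32) * pu * nu^3 * pv^3 * nv + (13/16) * pu * nu^3 * pv^4 + (61/128) * pu^2 * nu^2 * nv^4 + (107/32) * pu^2 * nu^2 * pv * nv^3 + (241/32) * pu^2 * nu^2 * pv^2 * nv^2 + (107/16) * pu^2 * nu^2 * pv^3 * nv + (61/32) * pu^2 * nu^2 * pv^4 + (13/32) * pu^3 * nu * nv^4 + (93/32) * pu^3 * nu * pv * nv^3 + (107/16) * pu^3 * nu * pv^2 * nv^2 + (97/16) * pu^3 * nu * pv^3 * nv + (7/4) * pu^3 * nu * pv^4 + (7/64) * pu^4 * nv^4 + (13/16) * pu^4 * pv * nv^3 + (61/32) * pu^4 * pv^2 * nv^2 + (7/4) * pu^4 * pv^3 * nv + (1/2) * pu^4 * pv^4"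
    unfolding xdefs by (rule I9_e2)
  have p: "0 \<le> (1/32) * nu^4 * nv^4 + (7/32) * nu^4 * pv * nv^3 + (61/128) * nu^4 * pv^2 * nv^2 + (13/32) * nu^4 * pv^3 * nv + (7/64) * nu^4 * pv^4 + (7/32) * pu * nu^3 * nv^4 + (97/64) * pu * nu^3 * pv * nv^3 + (107/32) * pu * nu^3 * pv^2 * nv^2 + (93/32) * pu * nu^3 * pv^3 * nv + (13/16) * pu * nu^3 * pv^4 + (61/128) * pu^2 * nu^2 * nv^4 + (107/32) * pu^2 * nu^2 * pv * nv^3 + (241/32) * pu^2 * nu^2 * pv^2 * nv^2 + (107/16) * pu^2 * nu^2 * pv^3 * nv + (61/32) * pu^2 * nu^2 * pv^4 + (13/32) * pu^3 * nu * nv^4 + (93/32) * pu^3 * nu * pv * nv^3 + (107/16) * pu^3 * nu * pv^2 * nv^2 + (97/16) * pu^3 * nu * pv^3 * nv + (7/4) * pu^3 * nu * pv^4 + (7/64) * pu^4 * nv^4 + (13/16) * pu^4 * pv * nv^3 + (61/32) * pu^4 * pv^2 * nv^2 + (7/4) * pu^4 * pv^3 * nv + (1/2) * pu^4 * pv^4"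
    using xnn by (intro add_nonneg_nonneg mult_nonneg_nonneg zero_le_power; simp)
  show "((1/2+u+u^2) * (1/2+v+v^2))^2 \<le> (a * b * (1/2+(1+u) * (1+v)))^2" using e1 e2 p by linarith
  have e3: "(1/2+(1+u) * (1+v)) = (3/4) * nu * nv + 1 * nu * pv + 1 * pu * nv + (3/2) * pu * pv" unfolding xdefs by (rule I9_e3)
  have "0 \<le> (3/4) * nu * nv + 1 * nu * pv + 1 * pu * nv + (3/2) * pu * pv"
    using xnn by (intro add_nonneg_nonneg mult_nonneg_nonneg zero_le_power; simp)
  then have "0 \<le> (1/2+(1+u) * (1+v))" using e3 by linarith
  then show "0 \<le> a * b * (1/2+(1+u) * (1+v))" using a0 b0 h0 by simp
qed

end

context
  fixes u v a b h :: real
  assumes U: "-1/2 \<le> u" "u \<le> 0" and V: "-1/2 \<le> v" "v \<le> 0"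
    and a0: "0 \<le> a" and a2: "a^2 = 1/2 - u^2"
    and b0: "0 \<le> b" and b2: "b^2 = 1/2 - v^2"
    and h0: "0 \<le> h" and h2: "h^2 = 1/2"
begin

lemma c04:
  assumes "u \<le> v"
  shows "vector [h, u, a] \<bullet> (rot ^^ 1) (vector [h * (1+v), 1/2+v, h * b]) \<le> 0"
proof -
  have e: "vector [h, u, a] \<bullet> (rot ^^ 1) (vector [h * (1+v), 1/2+v, h * b]) = h * (-(1/2+v) + u * (1+v) + a * b)"
    by (simp add: rotp_vec rot_vec dot_vec algebra_simps power2_eq_square)
  have w: "-(1/2+v) + u * (1+v) + a * b \<le> 0" unfolding h2 using I1[OF U V a0 a2 b0 b2 h0 h2 assms] by (simp add: algebra_simps add_divide_distrib)
  show ?thesis unfolding e by (rule mult_nonneg_nonpos[OF h0 w])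
qed

lemma c05:
  shows "vector [h, u, a] \<bullet> (rot ^^ 1) (vector [h * b, b * (1+v), 1/2+v+v^2]) \<le> 0"
proof -
  have e: "vector [h, u, a] \<bullet> (rot ^^ 1) (vector [h * b, b * (1+v), 1/2+v+v^2]) = a * (1/2+v+v^2) - h * b * (1+v-u)"
    by (simp add: rotp_vec rot_vec dot_vec algebra_simps power2_eq_square)
  have w: "a * (1/2+v+v^2) - h * b * (1+v-u) \<le> 0" unfolding h2 using I5[OF U V a0 a2 b0 b2 h0 h2] by (simp add: algebra_simps add_divide_distrib)
  show ?thesis unfolding e by (rule w)
qed

lemma c06:
  shows "vector [h, u, a] \<bullet> (rot ^^ 2) (vector [h, v, b]) \<le> 0"
proof -
  have e: "vector [h, u, a] \<bullet> (rot ^^ 2) (vector [h, v, b]) = - (h^2) - u * v + a * b"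
    by (simp add: rotp_vec rot_vec dot_vec algebra_simps power2_eq_square)
  have w: "- (h^2) - u * v + a * b \<le> 0" unfolding h2 using I2[OF U V a0 a2 b0 b2 h0 h2] by (simp add: algebra_simps add_divide_distrib)
  show ?thesis unfolding e by (rule w)
qed

lemma c07:
  shows "vector [h, u, a] \<bullet> (rot ^^ 2) (vector [h * (1+v), 1/2+v, h * b]) \<le> 0"
proof -
  have e: "vector [h, u, a] \<bullet> (rot ^^ 2) (vector [h * (1+v), 1/2+v, h * b]) = - (h^2) * (1+v) - u * (1/2+v) + h * a * b"
    by (simp add: rotp_vec rot_vec dot_vec algebra_simps power2_eq_square)
  have w: "- (h^2) * (1+v) - u * (1/2+v) + h * a * b \<le> 0" unfolding h2 using I3[OF U V a0 a2 b0 b2 h0 h2] by (simp add: algebra_simps add_divide_distrib)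
  show ?thesis unfolding e by (rule w)
qed

lemma c08:
  assumes "v \<le> u"
  shows "vector [h, u, a] \<bullet> (rot ^^ 2) (vector [h * b, b * (1+v), 1/2+v+v^2]) \<le> 0"
proof -
  have e: "vector [h, u, a] \<bullet> (rot ^^ 2) (vector [h * b, b * (1+v), 1/2+v+v^2]) = a * (1/2+v+v^2) - (h^2) * b - u * b * (1+v)"
    by (simp add: rotp_vec rot_vec dot_vec algebra_simps power2_eq_square)
  have w: "a * (1/2+v+v^2) - (h^2) * b - u * b * (1+v) \<le> 0" unfolding h2 using I6[OF U V a0 a2 b0 b2 h0 h2 assms] by (simp add: algebra_simps add_divide_distrib)
  show ?thesis unfolding e by (rule w)
qed

lemma c14:
  assumes "u \<le> v"
  shows "vector [h * (1+u), 1/2+u, h * a] \<bullet> (rot ^^ 1) (vector [h * b, b * (1+v), 1/2+v+v^2]) \<le> 0"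
proof -
  have e: "vector [h * (1+u), 1/2+u, h * a] \<bullet> (rot ^^ 1) (vector [h * b, b * (1+v), 1/2+v+v^2]) = h * (a * (1/2+v+v^2) - b * (1/2+v+u * v))"
    by (simp add: rotp_vec rot_vec dot_vec algebra_simps power2_eq_square)
  have w: "a * (1/2+v+v^2) - b * (1/2+v+u * v) \<le> 0" unfolding h2 using I7[OF U V a0 a2 b0 b2 h0 h2 assms] by (simp add: algebra_simps add_divide_distrib)
  show ?thesis unfolding e by (rule mult_nonneg_nonpos[OF h0 w])
qed

lemma c15:
  shows "vector [h * (1+u), 1/2+u, h * a] \<bullet> (rot ^^ 2) (vector [h, v, b]) \<le> 0"
proof -
  have e: "vector [h * (1+u), 1/2+u, h * a] \<bullet> (rot ^^ 2) (vector [h, v, b]) = - (h^2) * (1+u) - (1/2+u) * v + h * a * b"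
    by (simp add: rotp_vec rot_vec dot_vec algebra_simps power2_eq_square)
  have w: "- (h^2) * (1+u) - (1/2+u) * v + h * a * b \<le> 0" unfolding h2 using I3[OF U V a0 a2 b0 b2 h0 h2] by (simp add: algebra_simps add_divide_distrib)
  show ?thesis unfolding e by (rule w)
qed

lemma c16:
  shows "vector [h * (1+u), 1/2+u, h * a] \<bullet> (rot ^^ 2) (vector [h * (1+v), 1/2+v, h * b]) \<le> 0"
proof -
  have e: "vector [h * (1+u), 1/2+u, h * a] \<bullet> (rot ^^ 2) (vector [h * (1+v), 1/2+v, h * b]) = - (h^2) * (1+u) * (1+v) - (1/2+u) * (1/2+v) + (h^2) * a * b"
    by (simp add: rotp_vec rot_vec dot_vec algebra_simps power2_eq_square)
  have w: "- (h^2) * (1+u) * (1+v) - (1/2+u) * (1/2+v) + (h^2) * a * b \<le> 0" unfolding h2 using I4[OF U V a0 a2 b0 b2 h0 h2] by (simp add: algebra_simps add_divide_distrib)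
  show ?thesis unfolding e by (rule w)
qed

lemma c17:
  shows "vector [h * (1+u), 1/2+u, h * a] \<bullet> (rot ^^ 2) (vector [h * b, b * (1+v), 1/2+v+v^2]) \<le> 0"
proof -
  have e: "vector [h * (1+u), 1/2+u, h * a] \<bullet> (rot ^^ 2) (vector [h * b, b * (1+v), 1/2+v+v^2]) = - (h^2) * b * (1+u) - (1/2+u) * b * (1+v) + h * a * (1/2+v+v^2)"
    by (simp add: rotp_vec rot_vec dot_vec algebra_simps power2_eq_square)
  have w: "- (h^2) * b * (1+u) - (1/2+u) * b * (1+v) + h * a * (1/2+v+v^2) \<le> 0" unfolding h2 using I8[OF U V a0 a2 b0 b2 h0 h2] by (simp add: algebra_simps add_divide_distrib)
  show ?thesis unfolding e by (rule w)
qed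

lemma c18:
  assumes "v \<le> u"
  shows "vector [h * (1+u), 1/2+u, h * a] \<bullet> (rot ^^ 3) (vector [h, v, b]) \<le> 0"
proof -
  have e: "vector [h * (1+u), 1/2+u, h * a] \<bullet> (rot ^^ 3) (vector [h, v, b]) = h * (v * (1+u) - (1/2+u) + a * b)"
    by (simp add: rotp_vec rot_vec dot_vec algebra_simps power2_eq_square)
  have w: "v * (1+u) - (1/2+u) + a * b \<le> 0" unfolding h2 using I1[of v u b a h, OF V U b0 b2 a0 a2 h0 h2 assms] by (simp add: algebra_simps add_divide_distrib)
  show ?thesis unfolding e by (rule mult_nonneg_nonpos[OF h0 w])
qed

lemma c24:
  assumes "u \<le> v"
  shows "vector [h * a, a * (1+u), 1/2+u+u^2] \<bullet> (rot ^^ 2) (vector [h, v, b]) \<le> 0"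
proof -
  have e: "vector [h * a, a * (1+u), 1/2+u+u^2] \<bullet> (rot ^^ 2) (vector [h, v, b]) = - (h^2) * a - a * v * (1+u) + (1/2+u+u^2) * b"
    by (simp add: rotp_vec rot_vec dot_vec algebra_simps power2_eq_square)
  have w: "- (h^2) * a - a * v * (1+u) + (1/2+u+u^2) * b \<le> 0" unfolding h2 using I6[of v u b a h, OF V U b0 b2 a0 a2 h0 h2 assms] by (simp add: algebra_simps add_divide_distrib)
  show ?thesis unfolding e by (rule w)
qed

lemma c25:
  shows "vector [h * a, a * (1+u), 1/2+u+u^2] \<bullet> (rot ^^ 2) (vector [h * (1+v), 1/2+v, h * b]) \<le> 0"
proof -
  have e: "vector [h * a, a * (1+u), 1/2+u+u^2] \<bullet> (rot ^^ 2) (vector [h * (1+v), 1/2+v, h * b]) = - (h^2) * a * (1+v) - a * (1/2+v) * (1+u) + h * b * (1/2+u+u^2)"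
    by (simp add: rotp_vec rot_vec dot_vec algebra_simps power2_eq_square)
  have w: "- (h^2) * a * (1+v) - a * (1/2+v) * (1+u) + h * b * (1/2+u+u^2) \<le> 0" unfolding h2 using I8[of v u b a h, OF V U b0 b2 a0 a2 h0 h2] by (simp add: algebra_simps add_divide_distrib)
  show ?thesis unfolding e by (rule w)
qed

lemma c26:
  shows "vector [h * a, a * (1+u), 1/2+u+u^2] \<bullet> (rot ^^ 2) (vector [h * b, b * (1+v), 1/2+v+v^2]) \<le> 0"
proof -
  have e: "vector [h * a, a * (1+u), 1/2+u+u^2] \<bullet> (rot ^^ 2) (vector [h * b, b * (1+v), 1/2+v+v^2]) = - (h^2) * a * b - a * b * (1+u) * (1+v) + (1/2+u+u^2) * (1/2+v+v^2)"
    by (simp add: rotp_vec rot_vec dot_vec algebra_simps power2_eq_square)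
  have w: "- (h^2) * a * b - a * b * (1+u) * (1+v) + (1/2+u+u^2) * (1/2+v+v^2) \<le> 0" unfolding h2 using I9[OF U V a0 a2 b0 b2 h0 h2] by (simp add: algebra_simps add_divide_distrib)
  show ?thesis unfolding e by (rule w)
qed

lemma c27:
  shows "vector [h * a, a * (1+u), 1/2+u+u^2] \<bullet> (rot ^^ 3) (vector [h, v, b]) \<le> 0"
proof -
  have e: "vector [h * a, a * (1+u), 1/2+u+u^2] \<bullet> (rot ^^ 3) (vector [h, v, b]) = (1/2+u+u^2) * b - h * a * (1+u-v)"
    by (simp add: rotp_vec rot_vec dot_vec algebra_simps power2_eq_square)
  have w: "(1/2+u+u^2) * b - h * a * (1+u-v) \<le> 0" unfolding h2 using I5[of v u b a h, OF V U b0 b2 a0 a2 h0 h2] by (simp add: algebra_simps add_divide_distrib)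
  show ?thesis unfolding e by (rule w)
qed

lemma c28:
  assumes "v \<le> u"
  shows "vector [h * a, a * (1+u), 1/2+u+u^2] \<bullet> (rot ^^ 3) (vector [h * (1+v), 1/2+v, h * b]) \<le> 0"
proof -
  have e: "vector [h * a, a * (1+u), 1/2+u+u^2] \<bullet> (rot ^^ 3) (vector [h * (1+v), 1/2+v, h * b]) = h * ((1/2+u+u^2) * b - a * (1/2+u+v * u))"
    by (simp add: rotp_vec rot_vec dot_vec algebra_simps power2_eq_square)
  have w: "(1/2+u+u^2) * b - a * (1/2+u+v * u) \<le> 0" unfolding h2 using I7[of v u b a h, OF V U b0 b2 a0 a2 h0 h2 assms] by (simp add: algebra_simps add_divide_distrib)
  show ?thesis unfolding e by (rule mult_nonneg_nonpos[OF h0 w])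
qed

end
definition T :: "nat \<Rightarrow> real \<Rightarrow> real^3" where
  "T m x = (if m = 0 then r1 x else if m = 1 then (rot ^^ 3) (r2 x) else (rot ^^ 2) (r3 x))"

lemma vec3_eq: "(vector [x1, x2, x3] :: real^3) = vector [y1, y2, y3] \<longleftrightarrow> x1 = y1 \<and> x2 = y2 \<and> x3 = y3"
  by (simp add: vec_eq_iff forall_3)

lemma scale_vec: "(c::real) *\<^sub>R vector [x1, x2, x3] = (vector [c * x1, c * x2, c * x3] :: real^3)"
  by (simp add: vec_eq_iff forall_3)

lemma T0_vec: "T 0 x = vector [1 / sqrt 2, x, sqrt (1/2 - x^2)]"
  by (simp add: T_def r1_def)

lemma T1_vec:
  assumes "-1/2 \<le> x"
  shows "T 1 x = (1 / (1 + x)) *\<^sub>R vector [1 / sqrt 2 * (1 + x), 1/2 + x, 1 / sqrt 2 * sqrt (1/2 - x^2)]"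
proof -
  have ne: "1 + x \<noteq> 0" using assms by linarith
  show ?thesis
    unfolding T_def r2_def scale_vec using ne
    by (simp add: rotp_vec vec3_eq field_simps)
qed

lemma r3_vec:
  assumes "-1/2 \<le> x"
  shows "(rot ^^ 2) (r3 x) = (1 / (1 + x)) *\<^sub>R vector [1 / sqrt 2 * sqrt (1/2 - x^2), sqrt (1/2 - x^2) * (1 + x), 1/2 + x + x^2]"
proof -
  have ne: "1 + x \<noteq> 0" using assms by linarith
  define h where "h = 1 / sqrt (2::real)"
  define a where "a = sqrt (1/2 - x^2)"
  define ic where "ic = 1 / (1 + x)"
  have hh: "h * h = 1/2" unfolding h_def by simp
  have icx: "ic * (1 + x) = 1" unfolding ic_def using ne by simp
  have dv: "\<And>z. z / (1 + x) = z * ic" unfolding ic_def by simp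
  have e1: "r1 x = vector [h, x, a]" unfolding r1_def h_def a_def ..
  have e2: "r2 x = vector [- ((1/2 + x) * ic), h, h * (a * ic)]" unfolding r2_def h_def a_def dv ..
  have c1: "- (x * (h * (a * ic)) - a * h) - ic * (h * a) = (1 - ic * (1 + x)) * (h * a)"
    by (simp add: algebra_simps)
  have c2: "- (a * - ((1/2 + x) * ic) - h * (h * (a * ic))) - ic * (a * (1 + x)) = (h * h - 1/2) * (a * ic)"
    by (simp add: algebra_simps)
  have c3: "h * h - x * - ((1/2 + x) * ic) - ic * (1/2 + x + x^2) = (h * h - 1/2) + (1 - ic * (1 + x)) * (1/2)"
    by (simp add: algebra_simps power2_eq_square)
  show ?thesis
    unfolding r3_def e1 e2 cross_vec rotp_vec scale_vec vec3_eq ic_def[symmetric]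
    unfolding h_def[symmetric] a_def[symmetric]
    using c1 c2 c3 hh icx by simp
qed

lemma T2_vec:
  assumes "-1/2 \<le> x"
  shows "T 2 x = (1 / (1 + x)) *\<^sub>R vector [1 / sqrt 2 * sqrt (1/2 - x^2), sqrt (1/2 - x^2) * (1 + x), 1/2 + x + x^2]"
  unfolding T_def using r3_vec[OF assms] by simp

lemma rot_scale: "rot (c *\<^sub>R x) = c *\<^sub>R rot x"
  by (simp add: rot_def vec_eq_iff forall_3)

lemma rotpow_scale: "(rot ^^ n) (c *\<^sub>R x) = c *\<^sub>R (rot ^^ n) x"
  by (induction n) (simp_all add: rot_scale)

lemma rot_inner: "rot x \<bullet> rot y = x \<bullet> y"
  by (simp add: rot_def inner_vec_def sum_3 algebra_simps)

lemma rotpow_inner: "(rot ^^ n) x \<bullet> (rot ^^ n) y = x \<bullet> y"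
  by (induction n) (simp_all add: rot_inner)

lemma rot4: "(rot ^^ 4) x = x"
  by (simp add: rot_def vec_eq_iff forall_3 eval_nat_numeral)

lemma rot_mod: "(rot ^^ n) = (rot ^^ (n mod 4))"
proof (induction n rule: less_induct)
  case (less n)
  show ?case
  proof (cases "n < 4")
    case True
    then show ?thesis by simp
  next
    case False
    then have n: "n = (n - 4) + 4" by simp
    have "(rot ^^ n) = (rot ^^ (n - 4)) \<circ> (rot ^^ 4)" by (subst n) (rule funpow_add)
    also have "\<dots> = rot ^^ (n - 4)" by (simp add: rot4 fun_eq_iff)
    also have "\<dots> = rot ^^ ((n - 4) mod 4)" by (rule less.IH) (use False in simp)
    also have "(n - 4) mod 4 = n mod 4" using False by (simp add: le_mod_geq)
    finally show ?thesis .
  qed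
qed

lemma dm: fixes q r b :: int assumes "0 \<le> r" "r < b"
  shows "(r + q * b) div b = q" "(r + q * b) mod b = r"
proof -
  have "b \<noteq> 0" using assms by simp
  then show "(r + q * b) div b = q" "(r + q * b) mod b = r" using assms by simp_all
qed

lemma sq_bound: assumes "-1/2 \<le> (x::real)" "x \<le> 0" shows "x^2 \<le> 1/4"
proof -
  have "(-x) * (-x) \<le> (1/2) * (1/2)" using assms by (intro mult_mono) auto
  then show ?thesis by (simp add: power2_eq_square)
qed

lemma key:
  fixes u v :: real and m d :: nat
  assumes U: "-1/2 \<le> u" "u \<le> 0" and V: "-1/2 \<le> v" "v \<le> 0" and m: "m < 3"
    and d: "4 \<le> d" "d \<le> 8" and c4: "d = 4 \<Longrightarrow> u \<le> v" and c8: "d = 8 \<Longrightarrow> v \<le> u"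
  shows "T m u \<bullet> (rot ^^ ((m + d) div 3)) (T ((m + d) mod 3) v) \<le> 0"
proof -
  define h where "h = 1 / sqrt (2::real)"
  define a where "a = sqrt (1/2 - u^2)"
  define b where "b = sqrt (1/2 - v^2)"
  have h0: "0 \<le> h" unfolding h_def by simp
  have h2: "h^2 = 1/2" unfolding h_def by (simp add: power_divide)
  have a0: "0 \<le> a" and a2: "a^2 = 1/2 - u^2"
    using sq_bound[OF U] unfolding a_def by simp_all
  have b0: "0 \<le> b" and b2: "b^2 = 1/2 - v^2"
    using sq_bound[OF V] unfolding b_def by simp_all
  have Tu: "T 0 u = vector [h, u, a]"
      "T 1 u = (1 / (1 + u)) *\<^sub>R vector [h * (1 + u), 1/2 + u, h * a]"
      "T 2 u = (1 / (1 + u)) *\<^sub>R vector [h * a, a * (1 + u), 1/2 + u + u^2]"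
    unfolding h_def a_def by (rule T0_vec, rule T1_vec[OF U(1)], rule T2_vec[OF U(1)])
  have Tv: "T 0 v = vector [h, v, b]"
      "T 1 v = (1 / (1 + v)) *\<^sub>R vector [h * (1 + v), 1/2 + v, h * b]"
      "T 2 v = (1 / (1 + v)) *\<^sub>R vector [h * b, b * (1 + v), 1/2 + v + v^2]"
    unfolding h_def b_def by (rule T0_vec, rule T1_vec[OF V(1)], rule T2_vec[OF V(1)])
  have iu: "0 \<le> 1 / (1 + u)" and iv: "0 \<le> 1 / (1 + v)" using U V by simp_all
  note prem = U V a0 a2 b0 b2 h0 h2
  have sc: "\<And>c e x y k. 0 \<le> c \<Longrightarrow> 0 \<le> e \<Longrightarrow> x \<bullet> (rot ^^ k) y \<le> 0 \<Longrightarrow>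
      (c *\<^sub>R x) \<bullet> (rot ^^ k) (e *\<^sub>R y) \<le> (0::real)"
    by (simp add: rotpow_scale mult_nonneg_nonpos mult_nonneg_nonneg)
  have sc1: "\<And>e x y k. 0 \<le> e \<Longrightarrow> x \<bullet> (rot ^^ k) y \<le> 0 \<Longrightarrow>
      x \<bullet> (rot ^^ k) (e *\<^sub>R y) \<le> (0::real)"
    by (simp add: rotpow_scale mult_nonneg_nonpos)
  have sc2: "\<And>c x y k. 0 \<le> c \<Longrightarrow> x \<bullet> (rot ^^ k) y \<le> 0 \<Longrightarrow>
      (c *\<^sub>R x) \<bullet> (rot ^^ k) y \<le> (0::real)"
    by (simp add: mult_nonneg_nonpos)
  have "m = 0 \<or> m = 1 \<or> m = 2" using m by auto
  moreover have "d = 4 \<or> d = 5 \<or> d = 6 \<or> d = 7 \<or> d = 8" using d by auto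
  ultimately show ?thesis
  proof (elim disjE)
    assume hm: "m = 0" and hd: "d = 4"
    have q: "(m + d) div 3 = 1" "(m + d) mod 3 = 1" using hm hd by simp_all
    show ?thesis unfolding q unfolding hm Tu Tv by (rule sc1[OF iv c04[OF prem c4[OF hd]]])
  next
    assume hm: "m = 0" and hd: "d = 5"
    have q: "(m + d) div 3 = 1" "(m + d) mod 3 = 2" using hm hd by simp_all
    show ?thesis unfolding q unfolding hm Tu Tv by (rule sc1[OF iv c05[OF prem]])
  next
    assume hm: "m = 0" and hd: "d = 6"
    have q: "(m + d) div 3 = 2" "(m + d) mod 3 = 0" using hm hd by simp_all
    show ?thesis unfolding q unfolding hm Tu Tv by (rule c06[OF prem])
  next
    assume hm: "m = 0" and hd: "d = 7"
    have q: "(m + d) div 3 = 2" "(m + d) mod 3 = 1" using hm hd by simp_all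
    show ?thesis unfolding q unfolding hm Tu Tv by (rule sc1[OF iv c07[OF prem]])
  next
    assume hm: "m = 0" and hd: "d = 8"
    have q: "(m + d) div 3 = 2" "(m + d) mod 3 = 2" using hm hd by simp_all
    show ?thesis unfolding q unfolding hm Tu Tv by (rule sc1[OF iv c08[OF prem c8[OF hd]]])
  next
    assume hm: "m = 1" and hd: "d = 4"
    have q: "(m + d) div 3 = 1" "(m + d) mod 3 = 2" using hm hd by simp_all
    show ?thesis unfolding q unfolding hm Tu Tv by (rule sc[OF iu iv c14[OF prem c4[OF hd]]])
  next
    assume hm: "m = 1" and hd: "d = 5"
    have q: "(m + d) div 3 = 2" "(m + d) mod 3 = 0" using hm hd by simp_all
    show ?thesis unfolding q unfolding hm Tu Tv by (rule sc2[OF iu c15[OF prem]])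
  next
    assume hm: "m = 1" and hd: "d = 6"
    have q: "(m + d) div 3 = 2" "(m + d) mod 3 = 1" using hm hd by simp_all
    show ?thesis unfolding q unfolding hm Tu Tv by (rule sc[OF iu iv c16[OF prem]])
  next
    assume hm: "m = 1" and hd: "d = 7"
    have q: "(m + d) div 3 = 2" "(m + d) mod 3 = 2" using hm hd by simp_all
    show ?thesis unfolding q unfolding hm Tu Tv by (rule sc[OF iu iv c17[OF prem]])
  next
    assume hm: "m = 1" and hd: "d = 8"
    have q: "(m + d) div 3 = 3" "(m + d) mod 3 = 0" using hm hd by simp_all
    show ?thesis unfolding q unfolding hm Tu Tv by (rule sc2[OF iu c18[OF prem c8[OF hd]]])
  next
    assume hm: "m = 2" and hd: "d = 4"
    have q: "(m + d) div 3 = 2" "(m + d) mod 3 = 0" using hm hd by simp_all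
    show ?thesis unfolding q unfolding hm Tu Tv by (rule sc2[OF iu c24[OF prem c4[OF hd]]])
  next
    assume hm: "m = 2" and hd: "d = 5"
    have q: "(m + d) div 3 = 2" "(m + d) mod 3 = 1" using hm hd by simp_all
    show ?thesis unfolding q unfolding hm Tu Tv by (rule sc[OF iu iv c25[OF prem]])
  next
    assume hm: "m = 2" and hd: "d = 6"
    have q: "(m + d) div 3 = 2" "(m + d) mod 3 = 2" using hm hd by simp_all
    show ?thesis unfolding q unfolding hm Tu Tv by (rule sc[OF iu iv c26[OF prem]])
  next
    assume hm: "m = 2" and hd: "d = 7"
    have q: "(m + d) div 3 = 3" "(m + d) mod 3 = 0" using hm hd by simp_all
    show ?thesis unfolding q unfolding hm Tu Tv by (rule sc2[OF iu c27[OF prem]])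
  next
    assume hm: "m = 2" and hd: "d = 8"
    have q: "(m + d) div 3 = 3" "(m + d) mod 3 = 1" using hm hd by simp_all
    show ?thesis unfolding q unfolding hm Tu Tv by (rule sc[OF iu iv c28[OF prem c8[OF hd]]])
  qed
qed

lemma Rc_decomp:
  fixes t :: real
  shows "Rc t = (rot ^^ nat ((\<lfloor>12 * t\<rfloor> div 3) mod 4))
                  (T (nat (\<lfloor>12 * t\<rfloor> mod 3)) ((12 * t - of_int \<lfloor>12 * t\<rfloor>) / 2 - 1/2))"
proof -
  define i where "i = \<lfloor>12 * t\<rfloor>"
  define l where "l = 12 * t - of_int i"
  have l0: "0 \<le> l" and l1: "l < 1"
    unfolding l_def i_def using of_int_floor_le[of "12 * t"] real_of_int_floor_add_one_gt[of "12 * t"]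
    by linarith+
  define n where "n = i div 12"
  define k where "k = (i mod 12) div 3"
  define m where "m = i mod 3"
  have i1: "i = 12 * n + i mod 12" unfolding n_def by simp
  have i2: "i mod 12 = 3 * k + (i mod 12) mod 3" unfolding k_def by simp
  have i3: "(i mod 12) mod 3 = m" unfolding m_def by (rule mod_mod_cancel) simp
  have im: "i = 12 * n + 3 * k + m" using i1 i2 i3 by linarith
  have r12: "0 \<le> i mod 12" "i mod 12 < 12" by simp_all
  have m0: "0 \<le> m" "m \<le> 2" unfolding m_def by simp_all
  have k0: "0 \<le> k" unfolding k_def by simp
  have "3 * k < 12" using i2 i3 r12 m0 by linarith
  then have k3: "k \<le> 3" by presburger
  have "i div 3 = 4 * n + k"
  proof -
    have "i = m + (4 * n + k) * 3" using im by simp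
    then show ?thesis using dm(1)[of m 3 "4 * n + k"] m0 by simp
  qed
  then have km: "(i div 3) mod 4 = k"
    using dm(2)[of k 4 n] k0 k3 by (simp add: add.commute mult.commute)
  have imr: "of_int i = 12 * of_int n + 3 * of_int k + (of_int m :: real)"
    using im by simp
  have k0r: "0 \<le> (of_int k :: real)" "(of_int k :: real) \<le> 3" using k0 k3 by simp_all
  have m0r: "0 \<le> (of_int m :: real)" "(of_int m :: real) \<le> 2" using m0 by simp_all
  have ti: "12 * t = 12 * of_int n + 3 * of_int k + of_int m + l"
    using imr l_def by linarith
  have fl: "\<lfloor>t\<rfloor> = n" unfolding floor_eq_iff using ti k0r m0r l0 l1 by linarith
  have fl4: "\<lfloor>4 * (t - of_int \<lfloor>t\<rfloor>)\<rfloor> = k" unfolding fl floor_eq_iff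
    using ti k0r m0r l0 l1 by (intro conjI) (simp_all add: algebra_simps)
  have nk: "real (nat k) = of_int k" using k0 by simp
  have tau: "t - of_int \<lfloor>t\<rfloor> - real (nat \<lfloor>4 * (t - of_int \<lfloor>t\<rfloor>)\<rfloor>) / 4 = (of_int m + l) / 12"
    unfolding fl4 nk unfolding fl using ti by (simp add: field_simps)
  have "Rc t = (rot ^^ nat \<lfloor>4 * (t - of_int \<lfloor>t\<rfloor>)\<rfloor>) (r0 (t - of_int \<lfloor>t\<rfloor> - real (nat \<lfloor>4 * (t - of_int \<lfloor>t\<rfloor>)\<rfloor>) / 4))"
    unfolding Rc_def Let_def by (rule refl)
  also have "\<dots> = (rot ^^ nat k) (r0 ((of_int m + l) / 12))"
    unfolding tau unfolding fl4 by (rule refl)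
  also have "r0 ((of_int m + l) / 12) = T (nat m) (l / 2 - 1/2)"
  proof -
    have "m = 0 \<or> m = 1 \<or> m = 2" using m0 by auto
    then show ?thesis
    proof (elim disjE)
      assume hm: "m = 0"
      have c: "(of_int m + l) / 12 < 1/12" using hm l1 by simp
      have e: "6 * ((of_int m + l) / 12) - 1/2 = l / 2 - 1/2" using hm by (simp add: field_simps)
      show ?thesis unfolding r0_def T_def using c e hm by simp
    next
      assume hm: "m = 1"
      have c: "\<not> (of_int m + l) / 12 < 1/12" "(of_int m + l) / 12 < 1/6" using hm l0 l1 by simp_all
      have e: "6 * ((of_int m + l) / 12) - 1 = l / 2 - 1/2" using hm by (simp add: field_simps)
      have nm: "nat m = 1" using hm by simp
      show ?thesis unfolding r0_def T_def nm using c e by simp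
    next
      assume hm: "m = 2"
      have c: "\<not> (of_int m + l) / 12 < 1/12" "\<not> (of_int m + l) / 12 < 1/6" using hm l0 l1 by simp_all
      have e: "6 * ((of_int m + l) / 12) - 3/2 = l / 2 - 1/2" using hm by (simp add: field_simps)
      have nm: "nat m = 2" using hm by simp
      show ?thesis unfolding r0_def T_def nm using c e by simp
    qed
  qed
  finally show ?thesis unfolding i_def[symmetric] l_def[symmetric] km[symmetric] m_def[symmetric] .
qed

theorem lemma3p2:
  fixes t s :: real
  assumes "t + 1/3 \<le> s" and "s < t + 2/3"
  shows "Rc t \<bullet> Rc s \<le> 0"
proof -
  define i where "i = \<lfloor>12 * t\<rfloor>"
  define j where "j = \<lfloor>12 * s\<rfloor>"
  define l where "l = 12 * t - of_int i"
  define \<mu> where "\<mu> = 12 * s - of_int j"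
  have l0: "0 \<le> l" and l1: "l < 1"
    unfolding l_def i_def using of_int_floor_le[of "12 * t"] real_of_int_floor_add_one_gt[of "12 * t"]
    by linarith+
  have \<mu>0: "0 \<le> \<mu>" and \<mu>1: "\<mu> < 1"
    unfolding \<mu>_def j_def using of_int_floor_le[of "12 * s"] real_of_int_floor_add_one_gt[of "12 * s"]
    by linarith+
  define u where "u = l / 2 - 1/2"
  define v where "v = \<mu> / 2 - 1/2"
  have U: "-1/2 \<le> u" "u \<le> 0" unfolding u_def using l0 l1 by simp_all
  have V: "-1/2 \<le> v" "v \<le> 0" unfolding v_def using \<mu>0 \<mu>1 by simp_all
  define D where "D = j - i"
  have Dr: "of_int D = 12 * s - 12 * t + l - \<mu>" unfolding D_def l_def \<mu>_def by simp
  have "3 < (of_int D :: real)" "(of_int D :: real) < 9" using Dr assms l0 l1 \<mu>0 \<mu>1 by linarith+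
  then have D: "4 \<le> D" "D \<le> 8" by linarith+
  have c4: "nat D = 4 \<Longrightarrow> u \<le> v"
  proof -
    assume "nat D = 4"
    then have "(of_int D :: real) = 4" using D by simp
    then show "u \<le> v" unfolding u_def v_def using Dr assms by linarith
  qed
  have c8: "nat D = 8 \<Longrightarrow> v \<le> u"
  proof -
    assume "nat D = 8"
    then have "(of_int D :: real) = 8" using D by simp
    then show "v \<le> u" unfolding u_def v_def using Dr assms by linarith
  qed
  define m where "m = i mod 3"
  define K where "K = (i div 3) mod 4"
  have m0: "0 \<le> m" "m < 3" unfolding m_def by simp_all
  have K0: "0 \<le> K" unfolding K_def by simp
  have jD: "j = i + D" unfolding D_def by simp
  have jm: "j mod 3 = (m + D) mod 3" unfolding m_def jD by (simp add: mod_add_left_eq)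
  have "j = (m + D) + (i div 3) * 3" unfolding jD m_def by simp
  then have "j div 3 = i div 3 + (m + D) div 3" by simp
  then have jK: "(j div 3) mod 4 = (K + (m + D) div 3) mod 4" unfolding K_def by (simp add: mod_add_left_eq)
  have Rt: "Rc t = (rot ^^ nat K) (T (nat m) u)"
    unfolding Rc_decomp[of t] K_def m_def i_def u_def l_def ..
  have Rs: "Rc s = (rot ^^ nat ((j div 3) mod 4)) (T (nat (j mod 3)) v)"
    unfolding Rc_decomp[of s] j_def v_def \<mu>_def ..
  define dd where "dd = (nat m + nat D) div 3"
  have n1: "nat (j mod 3) = (nat m + nat D) mod 3"
    unfolding jm using m0 D by (simp add: nat_mod_distrib nat_add_distrib)
  have n2: "nat ((j div 3) mod 4) = (nat K + dd) mod 4"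
    unfolding jK dd_def using m0 D K0 by (simp add: nat_mod_distrib nat_add_distrib nat_div_distrib)
  have "Rc t \<bullet> Rc s = (rot ^^ nat K) (T (nat m) u) \<bullet> (rot ^^ (nat K + dd)) (T (nat (j mod 3)) v)"
  proof -
    have "rot ^^ ((nat K + dd) mod 4) = rot ^^ (nat K + dd)" by (rule rot_mod[symmetric])
    then show ?thesis unfolding Rt Rs n2 by simp
  qed
  also have "\<dots> = T (nat m) u \<bullet> (rot ^^ dd) (T (nat (j mod 3)) v)"
    by (simp only: funpow_add comp_apply rotpow_inner)
  also have "\<dots> \<le> 0"
    unfolding dd_def n1
    by (rule key[OF U V _ _ _ c4 c8]) (use m0 D in auto)
  finally show ?thesis .
qed

end
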